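(* Let $\mathcal{C}\subseteq 2^{[n]}$ and $\mathcal{D}\subseteq 2^{[m]}$ be reduced codes and let $f:\mathcal{C}\to\mathcal{D}$ be an isomorphism. Then $n=m$ and $f$ is a permutation isomorphism: there is a permutation $w$ of $[n]$ with $f(c)=w(c)$ for all $c\in\mathcal{C}$.
   Context: A code is a subset $\mathcal{C}\subseteq 2^{[n]}$. For $\sigma\subseteq[n]$, $\mathrm{Tk}_{\mathcal{C}}(\sigma)=\{c\in\mathcal{C}\mid\sigma\subseteq c\}$, $\mathrm{Tk}_{\mathcal{C}}(i)=\mathrm{Tk}_{\mathcal{C}}(\{i\})$; a trunk in $\mathcal{C}$ is a subset that is empty or of this form. A morphism $f:\mathcal{C}\to\mathcal{D}$ is a function such that preimages of trunks in $\mathcal{D}$ are trunks in $\mathcal{C}$; an isomorphism is a morphism with an inverse function that is a morphism. A neuron $i$ is trivial if $\mathrm{Tk}_{\mathcal{C}}(i)=\emptyset$; a nontrivial neuron $i$ is redundant if $\mathrm{Tk}_{\mathcal{C}}(i)=\mathrm{Tk}_{\mathcal{C}}(\sigma)$ for some $\sigma$ with $i\notin\sigma$. A code $\mathcal{C}\subseteq 2^{[n]}$ is reduced if no $i\in[n]$ is trivial or redundant. For a permutation $w$ and $c\subseteq[n]$, $w(c)=\{w(i)\mid i\in c\}$. *)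

theory Defs
  imports "HOL-Combinatorics.Permutations"
begin

definition is_code :: "nat \<Rightarrow> nat set set \<Rightarrow> bool" where
  "is_code n C \<longleftrightarrow> C \<subseteq> Pow {1..n}"

definition Tk :: "nat set set \<Rightarrow> nat set \<Rightarrow> nat set set" where
  "Tk C \<sigma> = {c \<in> C. \<sigma> \<subseteq> c}"

definition is_trunk :: "nat \<Rightarrow> nat set set \<Rightarrow> nat set set \<Rightarrow> bool" where
  "is_trunk n C T \<longleftrightarrow> T = {} \<or> (\<exists>\<sigma>. \<sigma> \<subseteq> {1..n} \<and> T = Tk C \<sigma>)"

definition code_morphism ::
  "nat \<Rightarrow> nat set set \<Rightarrow> nat \<Rightarrow> nat set set \<Rightarrow> (nat set \<Rightarrow> nat set) \<Rightarrow> bool" where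
  "code_morphism n C m D f \<longleftrightarrow>
     (\<forall>c\<in>C. f c \<in> D) \<and>
     (\<forall>T. is_trunk m D T \<longrightarrow> is_trunk n C {c \<in> C. f c \<in> T})"

definition code_isomorphism ::
  "nat \<Rightarrow> nat set set \<Rightarrow> nat \<Rightarrow> nat set set \<Rightarrow> (nat set \<Rightarrow> nat set) \<Rightarrow> bool" where
  "code_isomorphism n C m D f \<longleftrightarrow>
     code_morphism n C m D f \<and>
     (\<exists>g. code_morphism m D n C g \<and> (\<forall>c\<in>C. g (f c) = c) \<and> (\<forall>d\<in>D. f (g d) = d))"

definition trivial_neuron :: "nat set set \<Rightarrow> nat \<Rightarrow> bool" where
  "trivial_neuron C i \<longleftrightarrow> Tk C {i} = {}"

definition redundant_neuron :: "nat \<Rightarrow> nat set set \<Rightarrow> nat \<Rightarrow> bool" where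
  "redundant_neuron n C i \<longleftrightarrow> \<not> trivial_neuron C i \<and>
     (\<exists>\<sigma>. \<sigma> \<subseteq> {1..n} \<and> i \<notin> \<sigma> \<and> Tk C {i} = Tk C \<sigma>)"

definition reduced_code :: "nat \<Rightarrow> nat set set \<Rightarrow> bool" where
  "reduced_code n C \<longleftrightarrow> is_code n C \<and>
     (\<forall>i\<in>{1..n}. \<not> trivial_neuron C i \<and> \<not> redundant_neuron n C i)"

end

theory Submission
  imports Defs
begin

lemma key:
  assumes redC: "reduced_code n C"
    and fm: "code_morphism n C m D f"
    and gm: "code_morphism m D n C g"
    and gf: "\<forall>c\<in>C. g (f c) = c"
    and i: "i \<in> {1..n}"
  shows "\<exists>j\<in>{1..m}. \<forall>c\<in>C. (j \<in> f c \<longleftrightarrow> i \<in> c)"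
proof -
  have fD: "\<forall>c\<in>C. f c \<in> D" and ftr: "\<And>T. is_trunk m D T \<Longrightarrow> is_trunk n C {c \<in> C. f c \<in> T}"
    using fm unfolding code_morphism_def by auto
  have gtr: "\<And>T. is_trunk n C T \<Longrightarrow> is_trunk m D {d \<in> D. g d \<in> T}"
    using gm unfolding code_morphism_def by auto
  have ntriv: "Tk C {i} \<noteq> {}" using redC i unfolding reduced_code_def trivial_neuron_def by auto
  have nred: "\<And>\<sigma>. \<sigma> \<subseteq> {1..n} \<Longrightarrow> i \<notin> \<sigma> \<Longrightarrow> Tk C {i} \<noteq> Tk C \<sigma>"
  proof -
    fix \<sigma> assume s: "\<sigma> \<subseteq> {1..n}" "i \<notin> \<sigma>"
    have "\<not> redundant_neuron n C i" using redC i unfolding reduced_code_def by blast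
    thus "Tk C {i} \<noteq> Tk C \<sigma>" using s ntriv unfolding redundant_neuron_def trivial_neuron_def by blast
  qed
  obtain c0 where c0: "c0 \<in> C" "i \<in> c0" using ntriv unfolding Tk_def by auto
  have "is_trunk n C (Tk C {i})" unfolding is_trunk_def using i by (intro disjI2 exI[of _ "{i}"]) auto
  hence T: "is_trunk m D {d \<in> D. g d \<in> Tk C {i}}" by (rule gtr)
  have "f c0 \<in> {d \<in> D. g d \<in> Tk C {i}}" using c0 fD gf unfolding Tk_def by auto
  with T obtain \<sigma> where \<sigma>: "\<sigma> \<subseteq> {1..m}" "{d \<in> D. g d \<in> Tk C {i}} = Tk D \<sigma>"
    unfolding is_trunk_def by blast
  have iff1: "\<And>c. c \<in> C \<Longrightarrow> (i \<in> c \<longleftrightarrow> \<sigma> \<subseteq> f c)"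
  proof -
    fix c assume c: "c \<in> C"
    have "(f c \<in> {d \<in> D. g d \<in> Tk C {i}}) = (f c \<in> Tk D \<sigma>)" using \<sigma>(2) by simp
    thus "i \<in> c \<longleftrightarrow> \<sigma> \<subseteq> f c" using c fD gf unfolding Tk_def by auto
  qed
  have "\<forall>j\<in>\<sigma>. \<exists>\<tau>. \<tau> \<subseteq> {1..n} \<and> {c \<in> C. f c \<in> Tk D {j}} = Tk C \<tau>"
  proof
    fix j assume j: "j \<in> \<sigma>"
    have "is_trunk m D (Tk D {j})" unfolding is_trunk_def using j \<sigma>(1) by (intro disjI2 exI[of _ "{j}"]) auto
    hence P: "is_trunk n C {c \<in> C. f c \<in> Tk D {j}}" by (rule ftr)
    have "c0 \<in> {c \<in> C. f c \<in> Tk D {j}}" using c0 iff1[of c0] fD j unfolding Tk_def by auto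
    with P show "\<exists>\<tau>. \<tau> \<subseteq> {1..n} \<and> {c \<in> C. f c \<in> Tk D {j}} = Tk C \<tau>"
      unfolding is_trunk_def by blast
  qed
  then obtain \<tau> where \<tau>: "\<And>j. j \<in> \<sigma> \<Longrightarrow> \<tau> j \<subseteq> {1..n} \<and> {c \<in> C. f c \<in> Tk D {j}} = Tk C (\<tau> j)"
    by metis
  have mem: "\<And>j c. j \<in> \<sigma> \<Longrightarrow> c \<in> C \<Longrightarrow> (j \<in> f c \<longleftrightarrow> \<tau> j \<subseteq> c)"
  proof -
    fix j c assume j: "j \<in> \<sigma>" and c: "c \<in> C"
    have "(c \<in> {c \<in> C. f c \<in> Tk D {j}}) = (c \<in> Tk C (\<tau> j))" using \<tau>[OF j] by simp
    thus "j \<in> f c \<longleftrightarrow> \<tau> j \<subseteq> c" using c fD unfolding Tk_def by auto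
  qed
  have "Tk C {i} = Tk C (\<Union>j\<in>\<sigma>. \<tau> j)"
  proof -
    have "\<And>c. c \<in> C \<Longrightarrow> (i \<in> c \<longleftrightarrow> (\<Union>j\<in>\<sigma>. \<tau> j) \<subseteq> c)"
    proof -
      fix c assume c: "c \<in> C"
      have "(i \<in> c) = (\<forall>j\<in>\<sigma>. j \<in> f c)" using iff1[OF c] by blast
      also have "\<dots> = (\<forall>j\<in>\<sigma>. \<tau> j \<subseteq> c)" using mem c by blast
      also have "\<dots> = ((\<Union>j\<in>\<sigma>. \<tau> j) \<subseteq> c)" by blast
      finally show "(i \<in> c \<longleftrightarrow> (\<Union>j\<in>\<sigma>. \<tau> j) \<subseteq> c)" .
    qed
    thus ?thesis unfolding Tk_def by auto
  qed
  moreover have "(\<Union>j\<in>\<sigma>. \<tau> j) \<subseteq> {1..n}" using \<tau> by blast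
  ultimately have "i \<in> (\<Union>j\<in>\<sigma>. \<tau> j)" using nred by blast
  then obtain j where j: "j \<in> \<sigma>" "i \<in> \<tau> j" by blast
  have "\<forall>c\<in>C. (j \<in> f c \<longleftrightarrow> i \<in> c)"
    using mem[OF j(1)] j(2) iff1 j(1) by blast
  thus ?thesis using j(1) \<sigma>(1) by blast
qed

lemma tk_inj:
  assumes "reduced_code n C" "i \<in> {1..n}" "i' \<in> {1..n}" "\<forall>c\<in>C. (i \<in> c \<longleftrightarrow> i' \<in> c)"
  shows "i = i'"
proof (rule ccontr)
  assume "i \<noteq> i'"
  have "Tk C {i} = Tk C {i'}" using assms(4) unfolding Tk_def by auto
  moreover have "\<not> redundant_neuron n C i" "\<not> trivial_neuron C i" using assms(1,2) unfolding reduced_code_def by auto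
  ultimately show False using assms(3) \<open>i \<noteq> i'\<close> unfolding redundant_neuron_def
    by (metis empty_subsetI insert_subset singletonD)
qed

theorem corollary3p3:
  fixes n m :: nat and C D :: "nat set set" and f :: "nat set \<Rightarrow> nat set"
  assumes "reduced_code n C" and "reduced_code m D"
    and "code_isomorphism n C m D f"
  shows "n = m \<and> (\<exists>w. w permutes {1..n} \<and> (\<forall>c\<in>C. f c = w ` c))"
proof -
  obtain g where fm: "code_morphism n C m D f" and gm: "code_morphism m D n C g"
    and gf: "\<forall>c\<in>C. g (f c) = c" and fg: "\<forall>d\<in>D. f (g d) = d"
    using assms(3) unfolding code_isomorphism_def by blast
  have fD: "\<forall>c\<in>C. f c \<in> D" using fm unfolding code_morphism_def by auto
  have gC: "\<forall>d\<in>D. g d \<in> C" using gm unfolding code_morphism_def by auto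
  have cC: "\<forall>c\<in>C. c \<subseteq> {1..n}" and cD: "\<forall>d\<in>D. d \<subseteq> {1..m}"
    using assms(1,2) unfolding reduced_code_def is_code_def by auto
  define w where "w i = (SOME j. j \<in> {1..m} \<and> (\<forall>c\<in>C. (j \<in> f c \<longleftrightarrow> i \<in> c)))" for i
  have w: "\<And>i. i \<in> {1..n} \<Longrightarrow> w i \<in> {1..m} \<and> (\<forall>c\<in>C. (w i \<in> f c \<longleftrightarrow> i \<in> c))"
  proof -
    fix i assume i: "i \<in> {1..n}"
    from key[OF assms(1) fm gm gf i] show "w i \<in> {1..m} \<and> (\<forall>c\<in>C. (w i \<in> f c \<longleftrightarrow> i \<in> c))"
      unfolding w_def by (rule someI_ex[where P="\<lambda>j. j \<in> {1..m} \<and> (\<forall>c\<in>C. (j \<in> f c \<longleftrightarrow> i \<in> c))", OF bexE]) blast+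
  qed
  have bij: "bij_betw w {1..n} {1..m}"
  proof (rule bij_betw_imageI)
    show "inj_on w {1..n}"
    proof (rule inj_onI)
      fix i i' assume i: "i \<in> {1..n}" and i': "i' \<in> {1..n}" and e: "w i = w i'"
      show "i = i'" using tk_inj[OF assms(1) i i'] w[OF i] w[OF i'] e by metis
    qed
    show "w ` {1..n} = {1..m}"
    proof
      show "w ` {1..n} \<subseteq> {1..m}" using w by blast
      show "{1..m} \<subseteq> w ` {1..n}"
      proof
        fix j assume j: "j \<in> {1..m}"
        obtain i where i: "i \<in> {1..n}" and hi: "\<forall>d\<in>D. (i \<in> g d \<longleftrightarrow> j \<in> d)"
          using key[OF assms(2) gm fm fg j] by blast
        have h1: "\<forall>c\<in>C. (j \<in> f c \<longleftrightarrow> i \<in> c)" using hi fD gf by metis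
        have "\<forall>d\<in>D. (j \<in> d \<longleftrightarrow> w i \<in> d)" using h1 w[OF i] fg gC by metis
        hence "j = w i" using tk_inj[OF assms(2) j] w[OF i] by blast
        thus "j \<in> w ` {1..n}" using i by blast
      qed
    qed
  qed
  have nm: "n = m" using bij_betw_same_card[OF bij] by simp
  define w' where "w' i = (if i \<in> {1..n} then w i else i)" for i
  have bij': "bij_betw w' {1..n} {1..n}"
    using bij nm by (subst bij_betw_cong[where g=w]) (auto simp: w'_def)
  have perm: "w' permutes {1..n}"
    by (rule bij_imp_permutes[OF bij']) (auto simp: w'_def)
  have "\<forall>c\<in>C. f c = w' ` c"
  proof
    fix c assume c: "c \<in> C"
    show "f c = w' ` c"
    proof
      show "f c \<subseteq> w' ` c"
      proof
        fix x assume x: "x \<in> f c"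
        hence "x \<in> {1..m}" using cD fD c by blast
        then obtain i where i: "i \<in> {1..n}" "x = w i" using bij unfolding bij_betw_def by (metis imageE)
        hence "i \<in> c" using w[OF i(1)] c x by blast
        thus "x \<in> w' ` c" using i by (auto simp: w'_def)
      qed
      show "w' ` c \<subseteq> f c"
      proof
        fix x assume "x \<in> w' ` c"
        then obtain i where i: "i \<in> c" "x = w' i" by blast
        have "i \<in> {1..n}" using cC c i by blast
        thus "x \<in> f c" using w[of i] c i by (auto simp: w'_def)
      qed
    qed
  qed
  thus ?thesis using nm perm by blast
qed

end
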